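(* Let $1<p,q<\infty$, $f\in L^p(\mathbb{R}^n)$, $g\in L^q(\mathbb{R}^n)$ with $\frac1p+\frac1q=\frac1r<1$ (allowing $\frac1r\le1$ if $n=1$). Then for every $i\in\{1,\dots,n\}$, $R>0$ and $\lambda>0$, $$m\big(\{x\in B_R:\ \pi(\mathcal{R}(f,g)(x),\mathcal{R}(f,g)(x+he_i))>\lambda\}\big)\to0\quad\text{as } h\to0.$$
   Context: Here $\mathcal{M}(f,g)(x)=\sup_{R>0}\frac{1}{m(B_R)}\int_{B_R}|f(x+z)g(x-z)|\,dz$, with $B_R$ the ball of radius $R$ centered at $0$ and $m$ Lebesgue measure; $e_i$ is the $i$-th standard basis vector. The set of good radii is $$\mathcal{R}(f,g)(x)=\Big\{r\ge0:\ \mathcal{M}(f,g)(x)=\limsup_{k\to\infty}\frac{1}{m(B_{r_k})}\int_{B_{r_k}}|f(x+y)g(x-y)|\,dy\ \text{for some sequence } r_k>0,\ r_k\to r\Big\}.$$ For $A\subset[0,\infty)$ and $\lambda\ge0$, $A_{(\lambda)}=\{t:\inf_{a\in A}|t-a|\le\lambda\}$, and the Hausdorff distance is $\pi(A,B)=\inf\{\delta>0: A\subset B_{(\delta)},\ B\subset A_{(\delta)}\}$. *)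

theory Defs
  imports "HOL-Analysis.Analysis" "HOL-Library.Liminf_Limsup"
begin

definition bavg :: "(real^'n \<Rightarrow> real) \<Rightarrow> (real^'n \<Rightarrow> real) \<Rightarrow> real^'n \<Rightarrow> real \<Rightarrow> ennreal" where
  "bavg f g x R =
     (set_nn_integral lebesgue (ball 0 R) (\<lambda>z. ennreal \<bar>f (x + z) * g (x - z)\<bar>))
       / emeasure lebesgue (ball (0::real^'n) R)"

definition bmax :: "(real^'n \<Rightarrow> real) \<Rightarrow> (real^'n \<Rightarrow> real) \<Rightarrow> real^'n \<Rightarrow> ennreal" where
  "bmax f g x = (SUP R\<in>{0<..}. bavg f g x R)"

definition good_radii :: "(real^'n \<Rightarrow> real) \<Rightarrow> (real^'n \<Rightarrow> real) \<Rightarrow> real^'n \<Rightarrow> real set" where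
  "good_radii f g x = {r. r \<ge> 0 \<and> (\<exists>rk::nat \<Rightarrow> real. (\<forall>k. rk k > 0) \<and> rk \<longlonglongrightarrow> r \<and>
       bmax f g x = limsup (\<lambda>k. bavg f g x (rk k)))}"

text \<open>lambda-neighbourhood A_(lambda) = {t. inf_{a in A} |t-a| <= lambda}; inf over the empty set is +infinity.\<close>
definition nbhd :: "real set \<Rightarrow> real \<Rightarrow> real set" where
  "nbhd A l = {t. (INF a\<in>A. ereal \<bar>t - a\<bar>) \<le> ereal l}"

text \<open>Hausdorff distance pi(A,B) (extended real; inf of the empty set is +infinity).\<close>
definition hdist :: "real set \<Rightarrow> real set \<Rightarrow> ereal" where
  "hdist A B = (INF d\<in>{d. d > 0 \<and> A \<subseteq> nbhd B d \<and> B \<subseteq> nbhd A d}. ereal d)"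

definition louter :: "'a::euclidean_space set \<Rightarrow> ennreal" where
  "louter A = (INF S\<in>{S\<in>sets lebesgue. A \<subseteq> S}. emeasure lebesgue S)"

definition in_Lp :: "real \<Rightarrow> ('a::euclidean_space \<Rightarrow> real) \<Rightarrow> bool" where
  "in_Lp p f \<longleftrightarrow> f \<in> borel_measurable lebesgue \<and> integrable lebesgue (\<lambda>x. \<bar>f x\<bar> powr p)"

end

theory Submission
  imports Defs
begin


lemma ennreal_tendsto_0I:
  fixes f :: "'b \<Rightarrow> ennreal"
  assumes "\<And>e::real. e > 0 \<Longrightarrow> eventually (\<lambda>x. f x < ennreal e) F"
  shows "(f \<longlongrightarrow> 0) F"
proof (rule order_tendstoI)
  fix a :: ennreal assume "a > 0"
  have "\<exists>e>0. ennreal e \<le> a"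
  proof (cases "a = top")
    case True then show ?thesis by (intro exI[of _ 1]) auto
  next
    case False then show ?thesis using \<open>a > 0\<close>
      by (intro exI[of _ "enn2real a"]) (auto simp: enn2real_positive_iff less_top)
  qed
  then obtain e where e: "e > 0" "ennreal e \<le> a" by blast
  show "eventually (\<lambda>x. f x < a) F"
    using assms[OF e(1)] by eventually_elim (use e in auto)
qed auto

lemma ennreal_tendsto_0I':
  fixes f :: "'b \<Rightarrow> ennreal" and c :: real
  assumes c: "c > 0" and "\<And>e::real. e > 0 \<Longrightarrow> eventually (\<lambda>x. f x < ennreal (c * e)) F"
  shows "(f \<longlongrightarrow> 0) F"
proof (rule ennreal_tendsto_0I)
  fix e :: real assume "e > 0"
  then have "e / c > 0" using c by simp
  from assms(2)[OF this] show "eventually (\<lambda>x. f x < ennreal e) F" using c by simp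
qed

lemma transl_cont:
  fixes E :: "'a::euclidean_space set"
  assumes E: "E \<in> sets lebesgue"
  shows "((\<lambda>v. emeasure lebesgue {x \<in> ball 0 R. (x \<in> E) \<noteq> (x + v \<in> E)}) \<longlongrightarrow> 0) (at 0)"
proof (rule ennreal_tendsto_0I'[of 4], simp)
  fix e :: real assume e: "e > 0"
  define E' where "E' = E \<inter> ball 0 (R+1)"
  have E': "E' \<in> sets lebesgue" using E by (auto simp: E'_def)
  obtain U where U: "open U" "E' \<subseteq> U" "emeasure lebesgue (U - E') < ennreal e"
    by (rule sets_lebesgue_outer_open[OF E' e])
  obtain K where K: "closed K" "K \<subseteq> E'" "emeasure lebesgue (E' - K) < ennreal e"
    by (rule sets_lebesgue_inner_closed[OF E' e])
  have "bounded K" using K(2) unfolding E'_def by (meson bounded_ball bounded_subset inf.boundedE)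
  then have "compact K" using K(1) by (simp add: compact_eq_bounded_closed)
  then obtain d where d: "d > 0" "(\<Union>x\<in>K. ball x d) \<subseteq> U"
    using compact_subset_open_imp_ball_epsilon_subset[OF _ U(1)] K U by blast
  have hU: "U \<in> sets lebesgue" using U by (simp add: borel_open)
  have hK: "K \<in> sets lebesgue" using K by (simp add: borel_closed)
  have UK: "U - K \<in> sets lebesgue" using hU hK by auto
  have mUK: "emeasure lebesgue (U - K) < ennreal (2*e)"
  proof -
    have "emeasure lebesgue (U - K) \<le> emeasure lebesgue ((U - E') \<union> (E' - K))"
      by (rule emeasure_mono) (use hU hK E' in auto)
    also have "\<dots> \<le> emeasure lebesgue (U - E') + emeasure lebesgue (E' - K)"
      by (rule emeasure_subadditive) (use hU hK E' in auto)
    also have "\<dots> < ennreal (e + e)" by (rule add_mono_ennreal) (use U K in auto)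
    finally show ?thesis by simp
  qed
  show "eventually (\<lambda>v. emeasure lebesgue {x \<in> ball 0 R. (x \<in> E) \<noteq> (x + v \<in> E)} < ennreal (4*e)) (at 0)"
  proof -
    have tr: "(\<lambda>x. -v + x) ` S = {x. x + v \<in> S}" for S and v :: 'a
    proof safe
      fix x assume "x + v \<in> S" then show "x \<in> (\<lambda>x. -v + x) ` S" by (rule rev_image_eqI) simp
    qed simp
    have trm: "emeasure lebesgue {x. x + v \<in> S} = emeasure lebesgue S" for S and v :: 'a
    proof -
      have "emeasure lebesgue ((\<lambda>x. 1 *\<^sub>R x + -v) ` S) = emeasure lebesgue S"
        using emeasure_lebesgue_affine[of 1 "-v" S] by simp
      moreover have "(\<lambda>x. 1 *\<^sub>R x + -v) ` S = {x. x + v \<in> S}" using tr[of v S] by (simp add: add.commute)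
      ultimately show ?thesis by simp
    qed
    have trs: "{x. x + v \<in> S} \<in> sets lebesgue" if "S \<in> sets lebesgue" for S and v :: 'a
      using lebesgue_sets_translation[OF that, of "-v"] tr[of v S] by simp
    show ?thesis
      unfolding eventually_at
    proof (intro exI[of _ "min d 1"] conjI ballI impI)
      show "min d 1 > 0" using d by simp
      fix v :: 'a assume "v \<in> UNIV" and "v \<noteq> 0 \<and> dist v 0 < min d 1"
      then have v: "norm v < d" "norm v < 1" by auto
      have T: "{x. x + v \<in> U - K} \<in> sets lebesgue" using trs[OF UK] .
      have sub: "{x \<in> ball 0 R. (x \<in> E) \<noteq> (x + v \<in> E)} \<subseteq> (U - K) \<union> {x. x + v \<in> U - K}"
      proof
        fix x assume "x \<in> {x \<in> ball 0 R. (x \<in> E) \<noteq> (x + v \<in> E)}"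
        then have x: "x \<in> ball 0 R" and ne: "(x \<in> E) \<noteq> (x + v \<in> E)" by auto
        show "x \<in> (U - K) \<union> {x. x + v \<in> U - K}"
        proof (rule ccontr)
        assume nn: "x \<notin> (U - K) \<union> {x. x + v \<in> U - K}"
        then have nUK: "x + v \<notin> U - K" by auto
        have xb: "x \<in> ball 0 (R+1)" using x by auto
        have "norm (x + v) \<le> norm x + norm v" by (rule norm_triangle_ineq)
        then have xvb: "x + v \<in> ball 0 (R+1)" using x v by simp
        have inU: "y + w \<in> U" if "y \<in> K" "norm w < d" for y w
        proof -
          have "y + w \<in> ball y d" using that by (simp add: dist_norm)
          then show ?thesis using d(2) that by blast
        qed
        { assume "x \<in> K"
          then have "x + v \<in> U" using inU v by blast
          moreover have "x \<in> E" using \<open>x \<in> K\<close> K E'_def by auto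
          ultimately have False using ne nUK K E'_def xvb by auto }
        moreover
        { assume "x \<notin> U"
          then have "x \<notin> E'" using U by auto
          then have "x \<notin> E" using xb E'_def by auto
          then have "x + v \<in> E" using ne by auto
          then have "x + v \<in> K" using nUK U E'_def xvb by auto
          then have "(x + v) + (-v) \<in> U" using inU v by (metis norm_minus_cancel)
          then have "x \<in> U" by simp
          with \<open>x \<notin> U\<close> have False by simp }
        ultimately show False using nn by blast
      qed
      qed
      have "emeasure lebesgue {x \<in> ball 0 R. (x \<in> E) \<noteq> (x + v \<in> E)} \<le> emeasure lebesgue ((U - K) \<union> {x. x + v \<in> U - K})"
        by (rule emeasure_mono[OF sub], rule sets.Un[OF UK T])
      also have "\<dots> \<le> emeasure lebesgue (U - K) + emeasure lebesgue {x. x + v \<in> U - K}"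
        by (rule emeasure_subadditive[OF UK T])
      also have "\<dots> = emeasure lebesgue (U - K) + emeasure lebesgue (U - K)" using trm[of v "U - K"] by (simp only:)
      also have "\<dots> < ennreal (2*e + 2*e)" by (rule add_mono_ennreal) (use mUK in auto)
      finally show "emeasure lebesgue {x \<in> ball 0 R. (x \<in> E) \<noteq> (x + v \<in> E)} < ennreal (4*e)" by simp
    qed
  qed
qed


lemma tr_set: "(\<lambda>x. -v + x) ` S = {x. x + v \<in> S}" for S and v :: "'a::euclidean_space"
proof safe
  fix x assume "x + v \<in> S" then show "x \<in> (\<lambda>x. -v + x) ` S" by (rule rev_image_eqI) simp
qed simp

lemma tr_meas: "emeasure lebesgue {x. x + v \<in> S} = emeasure lebesgue S" for S and v :: "'a::euclidean_space"
proof -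
  have "emeasure lebesgue ((\<lambda>x. 1 *\<^sub>R x + -v) ` S) = emeasure lebesgue S"
    using emeasure_lebesgue_affine[of 1 "-v" S] by simp
  moreover have "(\<lambda>x. 1 *\<^sub>R x + -v) ` S = {x. x + v \<in> S}" using tr_set[of v S] by (simp add: add.commute)
  ultimately show ?thesis by simp
qed

lemma tr_sets: "S \<in> sets lebesgue \<Longrightarrow> {x. x + v \<in> S} \<in> sets lebesgue" for S and v :: "'a::euclidean_space"
  using lebesgue_sets_translation[of S "-v"] tr_set[of v S] by simp

lemma D_sets:
  fixes E :: "'a::euclidean_space set"
  assumes "E \<in> sets lebesgue"
  shows "{x \<in> ball 0 R. (x \<in> E) \<noteq> (x + v \<in> E)} \<in> sets lebesgue"
proof -
  have "{x \<in> ball 0 R. (x \<in> E) \<noteq> (x + v \<in> E)} = ball 0 R \<inter> ((E - {x. x + v \<in> E}) \<union> ({x. x + v \<in> E} - E))"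
    by auto
  also have "\<dots> \<in> sets lebesgue" using tr_sets[OF assms, of v] assms by (intro sets.Int sets.Un sets.Diff) (auto simp: borel_open)
  finally show ?thesis .
qed

lemma hdist_le:
  assumes "l > 0" "A \<subseteq> nbhd B l" "B \<subseteq> nbhd A l"
  shows "hdist A B \<le> ereal l"
  unfolding hdist_def by (rule INF_lower) (use assms in auto)

lemma nbhdI:
  assumes "u \<in> B" "\<bar>t - u\<bar> \<le> l"
  shows "t \<in> nbhd B l"
proof -
  have "(INF a\<in>B. ereal \<bar>t - a\<bar>) \<le> ereal \<bar>t - u\<bar>" by (rule INF_lower) fact
  also have "\<dots> \<le> ereal l" using assms by simp
  finally show ?thesis unfolding nbhd_def by simp
qed

lemma hdist_self: "l > 0 \<Longrightarrow> hdist A A \<le> ereal l"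
  by (rule hdist_le) (auto intro: nbhdI)

lemma hdist_grid:
  fixes A B :: "real set" and l T :: real and N :: nat
  assumes l: "l > 0" and A: "A \<subseteq> {0..<T}" and B: "B \<subseteq> {0..<T}" and N: "real N * l > T"
    and pat: "\<And>j. j < N \<Longrightarrow> (A \<inter> {real j * l .. (real j + 1) * l} \<noteq> {}) = (B \<inter> {real j * l .. (real j + 1) * l} \<noteq> {})"
  shows "hdist A B \<le> ereal l"
proof -
  have main: "X \<subseteq> nbhd Y l" if X: "X \<subseteq> {0..<T}"
      and p: "\<And>j. j < N \<Longrightarrow> X \<inter> {real j * l .. (real j + 1) * l} \<noteq> {} \<Longrightarrow> Y \<inter> {real j * l .. (real j + 1) * l} \<noteq> {}"
    for X Y
  proof
    fix t assume t: "t \<in> X"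
    define j where "j = nat (floor (t / l))"
    have t0: "t \<ge> 0" "t < T" using t X by auto
    have "real j = of_int (floor (t / l))" using t0 l by (simp add: j_def)
    moreover have "of_int (floor (t / l)) \<le> t / l" by (rule of_int_floor_le)
    moreover have "t / l < of_int (floor (t / l)) + 1" by (rule real_of_int_floor_add_one_gt)
    ultimately have "real j \<le> t / l" "t / l < real j + 1" by simp_all
    then have j1: "real j * l \<le> t" "t < (real j + 1) * l"
      using l by (simp_all add: pos_le_divide_eq pos_divide_less_eq)
    have "real j * l < real N * l" using j1 t0 N by linarith
    then have "j < N" using l by simp
    then obtain u where u: "u \<in> Y" "u \<in> {real j * l .. (real j + 1) * l}" using p[of j] t j1 by fastforce
    show "t \<in> nbhd Y l" by (rule nbhdI[OF u(1)]) (use u(2) j1 in \<open>auto simp: algebra_simps\<close>)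
  qed
  show ?thesis
  proof (rule hdist_le[OF l])
    show "A \<subseteq> nbhd B l" by (rule main[OF A]) (use pat in blast)
    show "B \<subseteq> nbhd A l" by (rule main[OF B]) (use pat in blast)
  qed
qed

lemma floor_witness:
  fixes t T :: real assumes "t \<ge> T"
  shows "\<exists>k::nat. t \<in> {T + real k .. T + real k + 1}"
proof -
  define k where "k = nat (floor (t - T))"
  have "real k = of_int (floor (t - T))" using assms by (simp add: k_def)
  moreover have "of_int (floor (t - T)) \<le> t - T" by (rule of_int_floor_le)
  moreover have "t - T < of_int (floor (t - T)) + 1" by (rule real_of_int_floor_add_one_gt)
  ultimately have "T + real k \<le> t \<and> t \<le> T + real k + 1" by linarith
  then show ?thesis by auto
qed

lemma assemble:
  fixes F :: "real^'n \<Rightarrow> real set" and Z :: "(real^'n) set" and i :: 'n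
  assumes Fpos: "\<And>x. F x \<subseteq> {0..}"
    and Emeas: "\<And>a b. 0 \<le> a \<Longrightarrow> a \<le> b \<Longrightarrow> {x. F x \<inter> {a..b} \<noteq> {}} \<in> sets lebesgue"
    and Zmeas: "Z \<in> sets lebesgue"
    and ZF: "\<And>x. x \<in> Z \<Longrightarrow> F x = {0..}"
    and bdd: "\<And>x. x \<notin> Z \<Longrightarrow> \<exists>T. F x \<subseteq> {..T}"
    and l: "l > 0"
  shows "((\<lambda>h::real. louter {x \<in> ball 0 R. hdist (F x) (F (x + h *\<^sub>R axis i 1)) > ereal l}) \<longlongrightarrow> 0) (at 0)"
proof (rule ennreal_tendsto_0I'[of 4], simp)
  fix e :: real assume e: "e > 0"
  define S where "S n = {y \<in> ball 0 (R+1). y \<notin> Z \<and> (\<exists>k::nat. F y \<inter> {real n + real k .. real n + real k + 1} \<noteq> {})}" for n :: nat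
  have Ssets: "S n \<in> sets lebesgue" for n
  proof -
    have "S n = ball 0 (R+1) \<inter> (UNIV - Z) \<inter> (\<Union>k\<in>UNIV. {y. F y \<inter> {real n + real k .. real n + real k + 1} \<noteq> {}})"
      by (auto simp: S_def)
    also have "\<dots> \<in> sets lebesgue"
    proof (intro sets.Int sets.Diff)
      show "(\<Union>k\<in>UNIV. {y. F y \<inter> {real n + real k .. real n + real k + 1} \<noteq> {}}) \<in> sets lebesgue"
        by (rule sets.countable_UN) (auto intro!: Emeas)
    qed (use Zmeas in \<open>auto simp: borel_open\<close>)
    finally show ?thesis .
  qed
  have decS: "decseq S"
  proof (rule decseq_SucI)
    fix n show "S (Suc n) \<subseteq> S n"
    proof
      fix y assume "y \<in> S (Suc n)"
      then obtain k where "y \<in> ball 0 (R+1)" "y \<notin> Z" "F y \<inter> {real (Suc n) + real k .. real (Suc n) + real k + 1} \<noteq> {}"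
        unfolding S_def by blast
      then show "y \<in> S n" unfolding S_def by (intro CollectI conjI exI[of _ "Suc k"]) (auto simp: add_ac)
    qed
  qed
  have intS: "(\<Inter>n. S n) = {}"
  proof (rule ccontr)
    assume "(\<Inter>n. S n) \<noteq> {}"
    then obtain y where y: "\<And>n. y \<in> S n" by blast
    then have "y \<notin> Z" by (auto simp: S_def)
    then obtain T where T: "F y \<subseteq> {..T}" using bdd by blast
    obtain n :: nat where n: "T < real n" using reals_Archimedean2 by blast
    from y[of n] obtain k t where "t \<in> F y" "t \<ge> real n + real k" unfolding S_def by auto
    with T n show False by force
  qed
  have finS: "emeasure lebesgue (S n) \<noteq> \<infinity>" for n
  proof -
    have "emeasure lebesgue (S n) \<le> emeasure lebesgue (ball (0::real^'n) (R+1))"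
      by (rule emeasure_mono) (auto simp: S_def borel_open)
    also have "\<dots> < \<infinity>" using emeasure_lborel_ball_finite by (simp add: borel_open)
    finally show ?thesis by simp
  qed
  have "(\<lambda>n. emeasure lebesgue (S n)) \<longlonglongrightarrow> emeasure lebesgue (\<Inter>n. S n)"
    by (rule Lim_emeasure_decseq) (use Ssets decS finS in auto)
  then have "(\<lambda>n. emeasure lebesgue (S n)) \<longlonglongrightarrow> 0" using intS by simp
  from order_tendstoD(2)[OF this, of "ennreal e"] e
  obtain n0 where n0: "emeasure lebesgue (S n0) < ennreal e"
    by (auto simp: eventually_sequentially)
  define T where "T = real n0"
  define N where "N = nat (ceiling (T / l)) + 1"
  have NT: "real N * l > T"
  proof -
    have "T / l \<le> real (nat (ceiling (T / l)))" by linarith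
    then have "T / l < real N" unfolding N_def by simp
    then show ?thesis using l by (simp add: pos_divide_less_eq)
  qed
  define E where "E j = {x. F x \<inter> {real j * l .. (real j + 1) * l} \<noteq> {}}" for j :: nat
  have Esets: "E j \<in> sets lebesgue" for j unfolding E_def by (rule Emeas) (use l in auto)
  define D where "D A v = {x \<in> ball 0 R. (x \<in> A) \<noteq> (x + v \<in> A)}" for A and v :: "real^'n"
  define G where "G v = emeasure lebesgue (D Z v) + (\<Sum>j<N. emeasure lebesgue (D (E j) v))" for v
  have Dlim: "((\<lambda>h::real. emeasure lebesgue (D A (h *\<^sub>R axis i 1))) \<longlongrightarrow> 0) (at 0)" if "A \<in> sets lebesgue" for A
    unfolding D_def
  proof (rule tendsto_compose_eventually[OF transl_cont[OF that]])
    show "((\<lambda>h::real. h *\<^sub>R axis i (1::real)) \<longlongrightarrow> 0) (at 0)"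
      by (rule tendsto_eq_intros) (auto intro: tendsto_ident_at)
    show "eventually (\<lambda>h::real. h *\<^sub>R axis i (1::real) \<noteq> 0) (at 0)"
      unfolding eventually_at by (intro exI[of _ 1]) (auto simp: axis_eq_0_iff)
  qed
  have "((\<lambda>h::real. G (h *\<^sub>R axis i 1)) \<longlongrightarrow> 0 + (\<Sum>j<N. 0)) (at 0)"
    unfolding G_def by (intro tendsto_add tendsto_sum Dlim Zmeas Esets)
  then have "((\<lambda>h::real. G (h *\<^sub>R axis i 1)) \<longlongrightarrow> 0) (at 0)" by simp
  from order_tendstoD(2)[OF this, of "ennreal (2*e)"] e
  have evG: "eventually (\<lambda>h::real. G (h *\<^sub>R axis i 1) < ennreal (2*e)) (at 0)" by simp
  have ev1: "eventually (\<lambda>h::real. \<bar>h\<bar> < 1) (at 0)"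
    unfolding eventually_at by (intro exI[of _ 1]) auto
  have FT: "F y \<subseteq> {0..<T}" if "y \<in> ball 0 (R+1)" "y \<notin> Z" "y \<notin> S n0" for y
  proof
    fix t assume t: "t \<in> F y"
    have "t \<ge> 0" using t Fpos by auto
    moreover have "t < T"
    proof (rule ccontr)
      assume "\<not> t < T"
      then obtain k :: nat where "t \<in> {T + real k .. T + real k + 1}" using floor_witness[of T t] by auto
      then have "y \<in> S n0" using that t unfolding S_def T_def by blast
      with that show False by simp
    qed
    ultimately show "t \<in> {0..<T}" by simp
  qed
  show "eventually (\<lambda>h::real. louter {x \<in> ball 0 R. hdist (F x) (F (x + h *\<^sub>R axis i 1)) > ereal l} < ennreal (4 * e)) (at 0)"
    using evG ev1
  proof eventually_elim
    case (elim h)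
    define v where "v = h *\<^sub>R axis i (1::real)"
    have nv: "norm v < 1" using elim(2) by (simp add: v_def norm_axis_1)
    define W where "W = D Z v \<union> S n0 \<union> {x. x + v \<in> S n0} \<union> (\<Union>j\<in>{..<N}. D (E j) v)"
    have DZs: "D Z v \<in> sets lebesgue" unfolding D_def by (rule D_sets[OF Zmeas])
    have DEs: "D (E j) v \<in> sets lebesgue" for j unfolding D_def by (rule D_sets[OF Esets])
    have S's: "{x. x + v \<in> S n0} \<in> sets lebesgue" by (rule tr_sets[OF Ssets])
    have UEs: "(\<Union>j\<in>{..<N}. D (E j) v) \<in> sets lebesgue" using DEs by auto
    have Ws: "W \<in> sets lebesgue" unfolding W_def using DZs Ssets S's UEs by auto
    have sub: "{x \<in> ball 0 R. hdist (F x) (F (x + v)) > ereal l} \<subseteq> W"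
    proof
      fix x assume "x \<in> {x \<in> ball 0 R. hdist (F x) (F (x + v)) > ereal l}"
      then have x: "x \<in> ball 0 R" and hd: "hdist (F x) (F (x + v)) > ereal l" by auto
      show "x \<in> W"
      proof (rule ccontr)
        assume nW: "x \<notin> W"
        have xb: "x \<in> ball 0 (R+1)" using x by auto
        have "norm (x + v) \<le> norm x + norm v" by (rule norm_triangle_ineq)
        then have xvb: "x + v \<in> ball 0 (R+1)" using x nv by simp
        have Zeq: "(x \<in> Z) = (x + v \<in> Z)" using nW x unfolding W_def D_def by blast
        show False
        proof (cases "x \<in> Z")
          case True
          then have "F x = F (x + v)" using Zeq ZF by auto
          then show False using hdist_self[OF l, of "F x"] hd by simp
        next
          case False
          then have nZ: "x + v \<notin> Z" using Zeq by simp
          have "F x \<subseteq> {0..<T}" by (rule FT[OF xb False]) (use nW in \<open>auto simp: W_def\<close>)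
          moreover have "F (x + v) \<subseteq> {0..<T}" by (rule FT[OF xvb nZ]) (use nW in \<open>auto simp: W_def\<close>)
          moreover have "(F x \<inter> {real j * l .. (real j + 1) * l} \<noteq> {}) = (F (x + v) \<inter> {real j * l .. (real j + 1) * l} \<noteq> {})"
            if "j < N" for j
          proof -
            have "x \<notin> D (E j) v" using nW that unfolding W_def by blast
            then show ?thesis using x unfolding D_def E_def by auto
          qed
          ultimately have "hdist (F x) (F (x + v)) \<le> ereal l" by (intro hdist_grid[OF l _ _ NT]) auto
          then show False using hd by simp
        qed
      qed
    qed
    have "louter {x \<in> ball 0 R. hdist (F x) (F (x + v)) > ereal l} \<le> emeasure lebesgue W"
      unfolding louter_def by (rule INF_lower) (use Ws sub in auto)
    also have "\<dots> \<le> emeasure lebesgue (D Z v \<union> S n0 \<union> {x. x + v \<in> S n0}) + emeasure lebesgue (\<Union>j\<in>{..<N}. D (E j) v)"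
      unfolding W_def by (rule emeasure_subadditive) (use DZs Ssets S's UEs in auto)
    also have "\<dots> \<le> (emeasure lebesgue (D Z v \<union> S n0) + emeasure lebesgue {x. x + v \<in> S n0}) + (\<Sum>j<N. emeasure lebesgue (D (E j) v))"
      by (intro add_mono emeasure_subadditive emeasure_subadditive_finite) (use DZs Ssets S's DEs in auto)
    also have "\<dots> \<le> ((emeasure lebesgue (D Z v) + emeasure lebesgue (S n0)) + emeasure lebesgue {x. x + v \<in> S n0}) + (\<Sum>j<N. emeasure lebesgue (D (E j) v))"
      by (intro add_mono emeasure_subadditive order_refl) (use DZs Ssets in auto)
    also have "\<dots> = G v + (emeasure lebesgue (S n0) + emeasure lebesgue (S n0))"
      unfolding G_def tr_meas by (simp add: ac_simps)
    also have "\<dots> < ennreal (2*e + (e + e))"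
      by (intro add_mono_ennreal) (use elim(1) n0 in \<open>auto simp: v_def\<close>)
    finally show ?case by (simp add: v_def)
  qed
qed



lemma lborel_affine_eq:
  fixes t :: "'a::euclidean_space" and c :: real
  assumes c: "c = 1 \<or> c = -1"
  shows "lborel = distr lborel borel (\<lambda>z. t + c *\<^sub>R z)"
proof -
  have "c \<noteq> 0" using c by auto
  from lborel_affine[OF this, of t] have "lborel = density (distr lborel borel (\<lambda>z. t + c *\<^sub>R z)) (\<lambda>_. 1)"
    using c by auto
  then show ?thesis by (simp add: density_1)
qed

lemma AE_affine_lborel:
  fixes t :: "'a::euclidean_space" and c :: real
  assumes c: "c = 1 \<or> c = -1" and P: "AE u in lborel. P u"
  shows "AE z in lborel. P (t + c *\<^sub>R z)"
proof -
  from P obtain N where N: "{x \<in> space lborel. \<not> P x} \<subseteq> N" "emeasure lborel N = 0" "N \<in> sets lborel"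
    by (rule AE_E)
  have a: "AE u in lborel. u \<notin> N" using N by (intro AE_not_in) auto
  have "AE u in distr lborel borel (\<lambda>z. t + c *\<^sub>R z). u \<notin> N"
    by (subst lborel_affine_eq[OF c, of t, symmetric]) (rule a)
  then have "AE z in lborel. t + c *\<^sub>R z \<notin> N"
    by (subst (asm) AE_distr_iff) (use N in auto)
  then show ?thesis by eventually_elim (use N in auto)
qed

lemma nn_integral_affine_lborel:
  fixes t :: "'a::euclidean_space" and c :: real and h :: "'a \<Rightarrow> ennreal"
  assumes c: "c = 1 \<or> c = -1" and h: "h \<in> borel_measurable borel"
  shows "(\<integral>\<^sup>+z. h (t + c *\<^sub>R z) \<partial>lborel) = (\<integral>\<^sup>+z. h z \<partial>lborel)"
proof -
  have "(\<integral>\<^sup>+z. h z \<partial>lborel) = (\<integral>\<^sup>+z. h z \<partial>distr lborel borel (\<lambda>z. t + c *\<^sub>R z))"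
    by (subst lborel_affine_eq[OF c, of t, symmetric]) (rule refl)
  also have "\<dots> = (\<integral>\<^sup>+z. h (t + c *\<^sub>R z) \<partial>lborel)"
    by (rule nn_integral_distr) (use h in auto)
  finally show ?thesis ..
qed

definition phi :: "(real^'n \<Rightarrow> real) \<Rightarrow> (real^'n \<Rightarrow> real) \<Rightarrow> real^'n \<Rightarrow> real \<Rightarrow> ennreal" where
  "phi f g x r = (\<integral>\<^sup>+z. ennreal \<bar>f (x + z) * g (x - z)\<bar> * indicator (ball 0 r) z \<partial>lborel)"

lemma bavg_phi:
  fixes f g :: "real^'n \<Rightarrow> real"
  shows "bavg f g x r = phi f g x r / emeasure lborel (ball (0::real^'n) r)"
  unfolding bavg_def phi_def nn_integral_completion
  using emeasure_completion[of "ball (0::real^'n) r" lborel] by (simp add: borel_open)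

lemma phi_cong:
  assumes "AE u in lborel. f u = f' u" "AE u in lborel. g u = g' u"
  shows "phi f g x r = phi f' g' x r"
proof -
  have "AE z in lborel. f (x + 1 *\<^sub>R z) = f' (x + 1 *\<^sub>R z)" by (rule AE_affine_lborel) (use assms in auto)
  moreover have "AE z in lborel. g (x + (-1) *\<^sub>R z) = g' (x + (-1) *\<^sub>R z)" by (rule AE_affine_lborel) (use assms in auto)
  ultimately have "AE z in lborel. f (x + z) = f' (x + z) \<and> g (x - z) = g' (x - z)"
    by eventually_elim simp
  then show ?thesis unfolding phi_def
    by (intro nn_integral_cong_AE) (erule eventually_mono, simp)
qed

lemma bavg_cong:
  assumes "AE u in lborel. f u = f' u" "AE u in lborel. g u = g' u"
  shows "bavg f g = bavg f' g'"
  by (intro ext) (simp add: bavg_phi phi_cong[OF assms])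

lemma phi_meas:
  assumes [measurable]: "f \<in> borel_measurable borel" "g \<in> borel_measurable borel"
  shows "(\<lambda>x. phi f g x r) \<in> borel_measurable lborel"
  unfolding phi_def
  supply [measurable] = borel_open[OF open_ball, of "0::real^'n" r]
proof (rule lborel.borel_measurable_nn_integral)
  show "(\<lambda>(x, z). ennreal \<bar>f (x + z) * g (x - z)\<bar> * indicator (ball 0 r) z) \<in> borel_measurable (lborel \<Otimes>\<^sub>M lborel)"
    by measurable
qed

lemma bavg_meas:
  assumes "f \<in> borel_measurable borel" "g \<in> borel_measurable borel"
  shows "(\<lambda>x. bavg f g x r) \<in> borel_measurable lebesgue"
proof -
  have "(\<lambda>x. bavg f g x r) \<in> borel_measurable lborel"
    unfolding bavg_phi using phi_meas[OF assms] by measurable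
  then show ?thesis by (rule measurable_completion)
qed

lemma emeasure_ball0:
  assumes "r \<ge> 0"
  shows "emeasure lborel (ball (0::real^'n) r) = ennreal (unit_ball_vol (real CARD('n)) * r ^ CARD('n))"
  using emeasure_ball[of r "0::real^'n"] assms by simp

lemma bavg_eq:
  fixes f g :: "real^'n \<Rightarrow> real"
  assumes "r > 0"
  shows "bavg f g x r = phi f g x r / ennreal (unit_ball_vol (real CARD('n)) * r ^ CARD('n))"
  using assms by (simp add: bavg_phi emeasure_ball0)

lemma phi_mono:
  assumes "r \<le> r'"
  shows "phi f g x r \<le> phi f g x r'"
  unfolding phi_def
  by (intro nn_integral_mono) (use assms in \<open>auto simp: indicator_def\<close>)

lemma RA:
  fixes f g :: "real^'n \<Rightarrow> real"
  assumes r: "r > 0" and c: "c < bavg f g x r"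
  shows "eventually (\<lambda>r'. c < bavg f g x r') (at_right r)"
proof -
  define V where "V r = unit_ball_vol (real CARD('n)) * r ^ CARD('n)" for r :: real
  have Vpos: "V r > 0" if "r > 0" for r using that by (simp add: V_def)
  have bv: "bavg f g x r = phi f g x r / ennreal (V r)" if "r > 0" for r
    using bavg_eq[OF that] by (simp add: V_def)
  have evr: "eventually (\<lambda>r'. r < r') (at_right r)" by (rule eventually_at_right_less)
  show ?thesis
  proof (cases "phi f g x r")
    case top
    show ?thesis using evr
    proof eventually_elim
      case (elim r')
      then have "phi f g x r' = top" using phi_mono[of r r' f g x] top by (simp add: top_unique)
      then have "bavg f g x r' = top" using bv[of r'] Vpos[of r'] elim r by (simp add: ennreal_top_divide)
      moreover have "c < top" by (rule less_le_trans[OF c top_greatest])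
      ultimately show ?case by simp
    qed
  next
    case (real P)
    have "c < ennreal (P / V r)" using c bv[OF r] real Vpos[OF r] by (simp add: divide_ennreal)
    then obtain c' where c': "c = ennreal c'" "0 \<le> c'" "c' < P / V r"
      by (cases c) (auto simp: ennreal_less_iff)
    have "((\<lambda>r'. P / V r') \<longlongrightarrow> P / V r) (at_right r)"
      unfolding V_def
    proof (intro tendsto_intros)
      have "unit_ball_vol (real CARD('n)) > 0" by simp
      then have "unit_ball_vol (real CARD('n)) * r ^ CARD('n) > 0" using r by (intro mult_pos_pos) auto
      then show "unit_ball_vol (real CARD('n)) * r ^ CARD('n) \<noteq> 0" by linarith
    qed
    from order_tendstoD(1)[OF this c'(3)] evr
    show ?thesis
    proof eventually_elim
      case (elim r')
      have "c < ennreal (P / V r')" using c' elim by (simp add: ennreal_lessI)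
      also have "\<dots> = ennreal P / ennreal (V r')" using real Vpos[of r'] elim r by (simp add: divide_ennreal)
      also have "\<dots> \<le> phi f g x r' / ennreal (V r')"
        by (rule divide_right_mono_ennreal) (use phi_mono[of r r' f g x] real elim in auto)
      also have "\<dots> = bavg f g x r'" using bv[of r'] elim r by simp
      finally show ?case .
    qed
  qed
qed

lemma right_rat:
  fixes x :: real
  assumes "eventually P (at_right x)" "\<delta> > 0"
  shows "\<exists>q::rat. x < of_rat q \<and> of_rat q < x + \<delta> \<and> P (of_rat q)"
proof -
  from assms(1)[unfolded eventually_at_right[of x "x+1", OF less_add_one]] obtain b where b: "b > x" "\<forall>y>x. y < b \<longrightarrow> P y"
    by blast
  obtain r where r: "r \<in> \<rat>" "x < r" "r < min b (x + \<delta>)"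
    using Rats_dense_in_real[of x "min b (x + \<delta>)"] b assms(2) by auto
  from r(1) obtain q where "r = of_rat q" by (rule Rats_cases)
  then show ?thesis using r b by (intro exI[of _ q]) auto
qed

lemma A_le_M: "r > 0 \<Longrightarrow> bavg f g x r \<le> bmax f g x"
  unfolding bmax_def by (rule SUP_upper) auto

lemma limsup_le_M:
  assumes "\<And>k. rk k > 0"
  shows "limsup (\<lambda>k. bavg f g x (rk k)) \<le> bmax f g x"
  by (rule Limsup_bounded, rule always_eventually, rule allI, rule A_le_M[OF assms])

lemma gr_pos: "good_radii f g x \<subseteq> {0..}"
  unfolding good_radii_def by auto

lemma less_limsupD:
  fixes u :: "nat \<Rightarrow> ennreal"
  assumes "c < limsup u"
  shows "frequently (\<lambda>k. c < u k) sequentially"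
proof -
  have "\<not> limsup u \<le> c" using assms by simp
  then obtain y where y: "y > c" "\<not> eventually (\<lambda>k. y > u k) sequentially"
    unfolding Limsup_le_iff by auto
  then have "frequently (\<lambda>k. y \<le> u k) sequentially"
    unfolding frequently_def by (simp add: not_le)
  then show ?thesis by (rule frequently_elim1) (use y in auto)
qed

lemma gr_zero:
  assumes "bmax f g x = 0"
  shows "good_radii f g x = {0..}"
proof
  show "{0..} \<subseteq> good_radii f g x"
  proof
    fix r :: real assume "r \<in> {0..}"
    then have r: "r \<ge> 0" by simp
    define rk where "rk k = r + inverse (real (Suc k))" for k
    have "rk \<longlonglongrightarrow> r + 0" unfolding rk_def by (intro tendsto_intros LIMSEQ_inverse_real_of_nat)
    moreover have "\<forall>k. rk k > 0" using r by (simp add: rk_def add_nonneg_pos)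
    moreover have "bmax f g x = limsup (\<lambda>k. bavg f g x (rk k))"
      using limsup_le_M[of rk f g x] \<open>\<forall>k. rk k > 0\<close> assms by simp
    ultimately show "r \<in> good_radii f g x" unfolding good_radii_def using r by auto
  qed
qed (rule gr_pos)

lemma hit_char:
  fixes f g :: "real^'n \<Rightarrow> real"
  assumes ab: "0 \<le> a" "a \<le> b"
  shows "good_radii f g x \<inter> {a..b} \<noteq> {} \<longleftrightarrow>
    (\<forall>c<bmax f g x. \<forall>\<delta>>0. \<exists>\<rho>>0. a - \<delta> < \<rho> \<and> \<rho> < b + \<delta> \<and> c < bavg f g x \<rho>)"
  (is "?L \<longleftrightarrow> ?R")
proof
  assume ?L
  then obtain r where r0: "r \<in> good_radii f g x" "r \<in> {a..b}" by blast
  then obtain rk where r: "r \<in> {a..b}" "\<forall>k. rk k > 0" "rk \<longlonglongrightarrow> r"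
    "bmax f g x = limsup (\<lambda>k. bavg f g x (rk k))"
    unfolding good_radii_def by blast
  show ?R
  proof (intro allI impI)
    fix c :: ennreal and \<delta> :: real
    assume c: "c < bmax f g x" and d: "\<delta> > 0"
    have "frequently (\<lambda>k. c < bavg f g x (rk k)) sequentially"
      by (rule less_limsupD) (use c r in simp)
    moreover have "eventually (\<lambda>k. dist (rk k) r < \<delta>) sequentially"
      using r(3) d by (rule tendstoD)
    ultimately have "frequently (\<lambda>k. c < bavg f g x (rk k) \<and> dist (rk k) r < \<delta>) sequentially"
      by (rule frequently_eventually_frequently)
    then obtain k where k: "c < bavg f g x (rk k)" "dist (rk k) r < \<delta>" using frequently_ex by blast
    show "\<exists>\<rho>>0. a - \<delta> < \<rho> \<and> \<rho> < b + \<delta> \<and> c < bavg f g x \<rho>"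
      using k r by (intro exI[of _ "rk k"]) (auto simp: dist_real_def)
  qed
next
  assume R: ?R
  show ?L
  proof (cases "bmax f g x = 0")
    case True
    then have "a \<in> good_radii f g x" using gr_zero[OF True] ab by auto
    then show ?thesis using ab by auto
  next
    case False
    then have "0 < bmax f g x" by (simp add: zero_less_iff_neq_zero)
    from approx_from_below_dense_linorder[OF this] obtain u where
      u: "\<And>n. u n < bmax f g x" "u \<longlonglongrightarrow> bmax f g x" by blast
    have "\<forall>n. \<exists>\<rho>>0. a - inverse (real (Suc n)) < \<rho> \<and> \<rho> < b + inverse (real (Suc n)) \<and> u n < bavg f g x \<rho>"
      using R u(1) by auto
    then obtain \<rho> where \<rho>: "\<And>n. \<rho> n > 0" "\<And>n. a - inverse (real (Suc n)) < \<rho> n"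
      "\<And>n. \<rho> n < b + inverse (real (Suc n))" "\<And>n. u n < bavg f g x (\<rho> n)"
      by metis
    have inv1: "inverse (real (Suc n)) \<le> 1" for n by (simp add: inverse_le_1_iff)
    have "\<forall>n. \<rho> n \<in> {a-1..b+1}"
    proof
      fix n show "\<rho> n \<in> {a-1..b+1}" using \<rho>(2)[of n] \<rho>(3)[of n] inv1[of n] by auto
    qed
    from seq_compactE[OF compact_imp_seq_compact[OF compact_Icc] this]
    obtain r0 \<sigma> where \<sigma>: "strict_mono \<sigma>" "(\<rho> \<circ> \<sigma>) \<longlonglongrightarrow> r0" by blast
    have invs: "(\<lambda>n. inverse (real (Suc (\<sigma> n)))) \<longlonglongrightarrow> 0"
      using LIMSEQ_subseq_LIMSEQ[OF LIMSEQ_inverse_real_of_nat \<sigma>(1)] by (simp add: comp_def)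
    have "a - 0 \<le> r0"
    proof (rule LIMSEQ_le)
      show "(\<lambda>n. a - inverse (real (Suc (\<sigma> n)))) \<longlonglongrightarrow> a - 0" by (intro tendsto_intros invs)
      show "(\<rho> \<circ> \<sigma>) \<longlonglongrightarrow> r0" by fact
      show "\<exists>N. \<forall>n\<ge>N. a - inverse (real (Suc (\<sigma> n))) \<le> (\<rho> \<circ> \<sigma>) n" using \<rho>(2) by (auto intro: less_imp_le)
    qed
    then have "a \<le> r0" by simp
    have "r0 \<le> b"
    proof -
      have "r0 \<le> b + 0"
      proof (rule LIMSEQ_le)
        show "(\<lambda>n. b + inverse (real (Suc (\<sigma> n)))) \<longlonglongrightarrow> b + 0" by (intro tendsto_intros invs)
        show "(\<rho> \<circ> \<sigma>) \<longlonglongrightarrow> r0" by fact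
        show "\<exists>N. \<forall>n\<ge>N. (\<rho> \<circ> \<sigma>) n \<le> b + inverse (real (Suc (\<sigma> n)))" using \<rho>(3) by (auto intro: less_imp_le)
      qed
      then show ?thesis by simp
    qed
    have lim: "(\<lambda>n. bavg f g x ((\<rho> \<circ> \<sigma>) n)) \<longlonglongrightarrow> bmax f g x"
    proof (rule tendsto_sandwich)
      show "eventually (\<lambda>n. (u \<circ> \<sigma>) n \<le> bavg f g x ((\<rho> \<circ> \<sigma>) n)) sequentially"
        using \<rho>(4) by (intro always_eventually allI) (simp add: less_imp_le)
      show "eventually (\<lambda>n. bavg f g x ((\<rho> \<circ> \<sigma>) n) \<le> bmax f g x) sequentially"
        by (intro always_eventually allI) (simp add: A_le_M \<rho>(1))
      show "(u \<circ> \<sigma>) \<longlonglongrightarrow> bmax f g x" by (rule LIMSEQ_subseq_LIMSEQ[OF u(2) \<sigma>(1)])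
    qed simp
    have "limsup (\<lambda>n. bavg f g x ((\<rho> \<circ> \<sigma>) n)) = bmax f g x"
      by (rule lim_imp_Limsup[OF trivial_limit_sequentially lim])
    then have "r0 \<in> good_radii f g x"
      unfolding good_radii_def using \<open>a \<le> r0\<close> ab \<sigma>(2) \<rho>(1)
      by (intro CollectI conjI exI[of _ "\<rho> \<circ> \<sigma>"]) auto
    then show ?thesis using \<open>a \<le> r0\<close> \<open>r0 \<le> b\<close> by auto
  qed
qed

definition CP :: "(real^'n \<Rightarrow> real) \<Rightarrow> (real^'n \<Rightarrow> real) \<Rightarrow> real^'n \<Rightarrow> real \<Rightarrow> real \<Rightarrow> bool" where
  "CP f g x a b \<longleftrightarrow> (\<forall>c::rat. \<forall>k::nat. (0 \<le> real_of_rat c \<and> ennreal (real_of_rat c) < bmax f g x) \<longrightarrow>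
     (\<exists>\<rho>::rat. 0 < real_of_rat \<rho> \<and> a - inverse (real (Suc k)) < real_of_rat \<rho> \<and>
        real_of_rat \<rho> < b + inverse (real (Suc k)) \<and> ennreal (real_of_rat c) < bavg f g x (real_of_rat \<rho>)))"

lemma hit_count:
  fixes f g :: "real^'n \<Rightarrow> real"
  assumes ab: "0 \<le> a" "a \<le> b"
  shows "good_radii f g x \<inter> {a..b} \<noteq> {} \<longleftrightarrow> CP f g x a b"
  unfolding hit_char[OF ab]
proof
  assume R: "\<forall>c<bmax f g x. \<forall>\<delta>>0. \<exists>\<rho>>0. a - \<delta> < \<rho> \<and> \<rho> < b + \<delta> \<and> c < bavg f g x \<rho>"
  show "CP f g x a b" unfolding CP_def
  proof (intro allI impI)
    fix c :: rat and k :: nat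
    assume c: "0 \<le> real_of_rat c \<and> ennreal (real_of_rat c) < bmax f g x"
    define \<delta> where "\<delta> = inverse (real (Suc k))"
    have d: "\<delta> > 0" by (simp add: \<delta>_def)
    from R c d obtain \<rho> where \<rho>: "\<rho> > 0" "a - \<delta> < \<rho>" "\<rho> < b + \<delta>" "ennreal (real_of_rat c) < bavg f g x \<rho>"
      by blast
    have "eventually (\<lambda>r'. ennreal (real_of_rat c) < bavg f g x r') (at_right \<rho>)"
      by (rule RA[OF \<rho>(1) \<rho>(4)])
    from right_rat[OF this, of "b + \<delta> - \<rho>"] \<rho>(3)
    obtain q :: rat where q: "\<rho> < real_of_rat q" "real_of_rat q < b + \<delta>" "ennreal (real_of_rat c) < bavg f g x (real_of_rat q)"
      by auto
    show "\<exists>\<rho>::rat. 0 < real_of_rat \<rho> \<and> a - inverse (real (Suc k)) < real_of_rat \<rho> \<and>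
        real_of_rat \<rho> < b + inverse (real (Suc k)) \<and> ennreal (real_of_rat c) < bavg f g x (real_of_rat \<rho>)"
    proof (intro exI[of _ q] conjI)
      show "0 < real_of_rat q" using q \<rho> by linarith
    qed (use q \<rho> in \<open>auto simp: \<delta>_def\<close>)
  qed
next
  assume C: "CP f g x a b"
  show "\<forall>c<bmax f g x. \<forall>\<delta>>0. \<exists>\<rho>>0. a - \<delta> < \<rho> \<and> \<rho> < b + \<delta> \<and> c < bavg f g x \<rho>"
  proof (intro allI impI)
    fix c :: ennreal and \<delta> :: real
    assume c: "c < bmax f g x" and d: "\<delta> > 0"
    from ennreal_rat_dense[OF c] obtain r :: rat where r: "c < ennreal (real_of_rat r)" "ennreal (real_of_rat r) < bmax f g x"
      by blast
    have r0: "0 \<le> real_of_rat r"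
    proof (rule ccontr)
      assume "\<not> 0 \<le> real_of_rat r"
      then have "ennreal (real_of_rat r) = 0" by (simp add: ennreal_eq_0_iff)
      with r(1) show False by simp
    qed
    obtain k where k: "inverse (real (Suc k)) < \<delta>" using reals_Archimedean[OF d] by blast
    from C r r0 obtain \<rho> :: rat where \<rho>: "0 < real_of_rat \<rho>" "a - inverse (real (Suc k)) < real_of_rat \<rho>"
        "real_of_rat \<rho> < b + inverse (real (Suc k))" "ennreal (real_of_rat r) < bavg f g x (real_of_rat \<rho>)"
      unfolding CP_def by blast
    show "\<exists>\<rho>>0. a - \<delta> < \<rho> \<and> \<rho> < b + \<delta> \<and> c < bavg f g x \<rho>"
      using \<rho> k r(1) by (intro exI[of _ "real_of_rat \<rho>"]) auto
  qed
qed

lemma bmax_rat: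
  fixes f g :: "real^'n \<Rightarrow> real"
  shows "bmax f g x = (SUP q\<in>{q::rat. 0 < q}. bavg f g x (real_of_rat q))"
proof (rule antisym)
  show "(SUP q\<in>{q::rat. 0 < q}. bavg f g x (real_of_rat q)) \<le> bmax f g x"
    by (rule SUP_least) (simp add: A_le_M)
  show "bmax f g x \<le> (SUP q\<in>{q::rat. 0 < q}. bavg f g x (real_of_rat q))"
    unfolding bmax_def
  proof (rule SUP_least)
    fix r :: real assume "r \<in> {0<..}"
    then have r: "r > 0" by simp
    show "bavg f g x r \<le> (SUP q\<in>{q::rat. 0 < q}. bavg f g x (real_of_rat q))" (is "_ \<le> ?S")
    proof (rule ccontr)
      assume "\<not> bavg f g x r \<le> ?S"
      then have "?S < bavg f g x r" by simp
      from right_rat[OF RA[OF r this], of 1] obtain q :: rat where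
        q: "r < real_of_rat q" "?S < bavg f g x (real_of_rat q)" by auto
      have "0 < real_of_rat q" using q(1) r by linarith
      then have "0 < q" by simp
      then have "bavg f g x (real_of_rat q) \<le> ?S" by (intro SUP_upper) auto
      with q(2) show False by simp
    qed
  qed
qed

lemma bmax_meas:
  fixes f g :: "real^'n \<Rightarrow> real"
  assumes "f \<in> borel_measurable borel" "g \<in> borel_measurable borel"
  shows "(\<lambda>x. bmax f g x) \<in> borel_measurable lebesgue"
  unfolding bmax_rat
  by (rule borel_measurable_SUP) (auto intro: bavg_meas[OF assms])

lemma hit_sets:
  fixes f g :: "real^'n \<Rightarrow> real"
  assumes fg: "f \<in> borel_measurable borel" "g \<in> borel_measurable borel" and ab: "0 \<le> a" "a \<le> b"
  shows "{x. good_radii f g x \<inter> {a..b} \<noteq> {}} \<in> sets lebesgue"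
proof -
  note [measurable] = bmax_meas[OF fg] bavg_meas[OF fg]
  have "Measurable.pred lebesgue (\<lambda>x. CP f g x a b)"
    unfolding CP_def by measurable
  then show ?thesis unfolding hit_count[OF ab] by (simp add: pred_def)
qed

lemma zero_sets:
  fixes f g :: "real^'n \<Rightarrow> real"
  assumes fg: "f \<in> borel_measurable borel" "g \<in> borel_measurable borel"
  shows "{x. bmax f g x = 0} \<in> sets lebesgue"
proof -
  note [measurable] = bmax_meas[OF fg]
  have "Measurable.pred lebesgue (\<lambda>x. bmax f g x = 0)" by measurable
  then show ?thesis by (simp add: pred_def)
qed

lemma young_var:
  fixes a b t p q :: real
  assumes a: "a \<ge> 0" and b: "b \<ge> 0" and t: "t > 0" and p: "p > 1" and q: "q \<ge> p / (p - 1)"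
  shows "a * b \<le> t + (1 + t) * a powr p + t powr (p / (p - 1) - q) * b powr q"
proof -
  define s where "s = p / (p - 1)"
  have s1: "s - 1 = 1 / (p - 1)" using p by (simp add: s_def field_simps)
  have sp: "(s - 1) * (p - 1) = 1" using p s1 by simp
  have nn1: "0 \<le> (1 + t) * a powr p" using t by simp
  have nn2: "0 \<le> t powr (s - q) * b powr q" by simp
  have "a * b \<le> t + (1 + t) * a powr p + t powr (s - q) * b powr q"
  proof (cases "b < t")
    case True
    have "a * b \<le> a * t" using True a by (intro mult_left_mono) auto
    also have "a \<le> 1 + a powr p"
    proof (cases "a \<le> 1")
      case True then show ?thesis by (smt (verit) powr_ge_zero)
    next
      case False
      then have "a powr 1 \<le> a powr p" using p by (intro powr_mono) auto
      then show ?thesis using False by simp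
    qed
    then have "a * t \<le> (1 + a powr p) * t" using t by (intro mult_right_mono) auto
    also have "\<dots> = t + t * a powr p" by (simp add: algebra_simps)
    also have "\<dots> \<le> t + (1 + t) * a powr p" by (intro add_left_mono mult_right_mono) auto
    finally show ?thesis using nn2 by linarith
  next
    case False
    then have bt: "t \<le> b" "b > 0" using t by auto
    show ?thesis
    proof (cases "a \<le> b powr (s - 1)")
      case True
      have "a * b \<le> b powr (s - 1) * b" using True b by (intro mult_right_mono) auto
      also have "\<dots> = b powr (s - 1) * b powr 1" using bt by simp
      also have "\<dots> = b powr (s - 1 + 1)" by (rule powr_add[symmetric])
      also have "\<dots> = b powr (s - q + q)" by simp
      also have "\<dots> = b powr (s - q) * b powr q" by (rule powr_add)
      also have "\<dots> \<le> t powr (s - q) * b powr q"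
        using q bt t unfolding s_def by (intro mult_right_mono powr_mono2') auto
      finally show ?thesis using nn1 t by linarith
    next
      case False
      then have a0: "a > 0" using b by (smt (verit) powr_ge_zero)
      have "b = (b powr (s - 1)) powr (p - 1)" using bt sp by (simp add: powr_powr)
      also have "\<dots> < a powr (p - 1)" using False p by (intro powr_less_mono2) auto
      finally have "a * b \<le> a * a powr (p - 1)" using a0 by (intro mult_left_mono) auto
      also have "\<dots> = a powr 1 * a powr (p - 1)" using a0 by simp
      also have "\<dots> = a powr (1 + (p - 1))" by (rule powr_add[symmetric])
      also have "\<dots> = a powr p" by simp
      finally have "a * b \<le> a powr p" .
      moreover have "a powr p \<le> (1 + t) * a powr p" using t by (simp add: mult_le_cancel_right1)
      ultimately show ?thesis using nn2 t by linarith
    qed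
  qed
  then show ?thesis by (simp add: s_def)
qed



lemma phi_bound:
  fixes f g :: "real^'n \<Rightarrow> real"
  assumes fg[measurable]: "f \<in> borel_measurable borel" "g \<in> borel_measurable borel"
    and p: "p > 1" and q: "q \<ge> p / (p - 1)" and t: "t > 0" and r: "r \<ge> 0"
  shows "phi f g x r \<le> ennreal (t * (unit_ball_vol (real CARD('n)) * r ^ CARD('n)))
     + ennreal (1 + t) * (\<integral>\<^sup>+z. ennreal (\<bar>f z\<bar> powr p) \<partial>lborel)
     + ennreal (t powr (p / (p - 1) - q)) * (\<integral>\<^sup>+z. ennreal (\<bar>g z\<bar> powr q) \<partial>lborel)"
proof -
  define C where "C = t powr (p / (p - 1) - q)"
  have [measurable]: "ball (0::real^'n) r \<in> sets borel" by (simp add: borel_open)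
  have pt: "ennreal \<bar>f (x + z) * g (x - z)\<bar> * indicator (ball 0 r) z \<le>
      ennreal t * indicator (ball 0 r) z + ennreal (1 + t) * ennreal (\<bar>f (x + z)\<bar> powr p)
      + ennreal C * ennreal (\<bar>g (x - z)\<bar> powr q)" for z
  proof (cases "z \<in> ball 0 r")
    case True
    have "\<bar>f (x + z) * g (x - z)\<bar> = \<bar>f (x + z)\<bar> * \<bar>g (x - z)\<bar>" by (simp add: abs_mult)
    also have "\<dots> \<le> t + (1 + t) * \<bar>f (x + z)\<bar> powr p + C * \<bar>g (x - z)\<bar> powr q"
      unfolding C_def by (rule young_var) (use p q t in auto)
    finally have "ennreal \<bar>f (x + z) * g (x - z)\<bar> \<le> ennreal (t + (1 + t) * \<bar>f (x + z)\<bar> powr p + C * \<bar>g (x - z)\<bar> powr q)"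
      by (rule ennreal_leI)
    also have "\<dots> = ennreal t + ennreal (1 + t) * ennreal (\<bar>f (x + z)\<bar> powr p) + ennreal C * ennreal (\<bar>g (x - z)\<bar> powr q)"
      using t by (simp add: C_def ennreal_plus[symmetric] ennreal_mult[symmetric] del: ennreal_plus)
    finally show ?thesis using True by simp
  qed simp
  have "phi f g x r \<le> (\<integral>\<^sup>+z. ennreal t * indicator (ball 0 r) z + ennreal (1 + t) * ennreal (\<bar>f (x + z)\<bar> powr p)
      + ennreal C * ennreal (\<bar>g (x - z)\<bar> powr q) \<partial>lborel)"
    unfolding phi_def by (rule nn_integral_mono) (rule pt)
  also have "\<dots> = (\<integral>\<^sup>+z. ennreal t * indicator (ball (0::real^'n) r) z \<partial>lborel) + (\<integral>\<^sup>+z. ennreal (1 + t) * ennreal (\<bar>f (x + z)\<bar> powr p) \<partial>lborel)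
      + (\<integral>\<^sup>+z. ennreal C * ennreal (\<bar>g (x - z)\<bar> powr q) \<partial>lborel)"
    by (simp add: nn_integral_add)
  also have "\<dots> = ennreal t * emeasure lborel (ball (0::real^'n) r) + ennreal (1 + t) * (\<integral>\<^sup>+z. ennreal (\<bar>f (x + 1 *\<^sub>R z)\<bar> powr p) \<partial>lborel)
      + ennreal C * (\<integral>\<^sup>+z. ennreal (\<bar>g (x + (-1) *\<^sub>R z)\<bar> powr q) \<partial>lborel)"
    by (simp add: nn_integral_cmult)
  also have "(\<integral>\<^sup>+z. ennreal (\<bar>f (x + 1 *\<^sub>R z)\<bar> powr p) \<partial>lborel) = (\<integral>\<^sup>+z. ennreal (\<bar>f z\<bar> powr p) \<partial>lborel)"
    by (rule nn_integral_affine_lborel[where h="\<lambda>u. ennreal (\<bar>f u\<bar> powr p)"]) auto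
  also have "(\<integral>\<^sup>+z. ennreal (\<bar>g (x + (-1) *\<^sub>R z)\<bar> powr q) \<partial>lborel) = (\<integral>\<^sup>+z. ennreal (\<bar>g z\<bar> powr q) \<partial>lborel)"
    by (rule nn_integral_affine_lborel[where h="\<lambda>u. ennreal (\<bar>g u\<bar> powr q)"]) auto
  also have "ennreal t * emeasure lborel (ball (0::real^'n) r) = ennreal (t * (unit_ball_vol (real CARD('n)) * r ^ CARD('n)))"
    using r t by (simp add: emeasure_ball0 ennreal_mult)
  finally show ?thesis by (simp add: C_def)
qed

lemma bdd_gr:
  fixes f g :: "real^'n \<Rightarrow> real"
  assumes fg[measurable]: "f \<in> borel_measurable borel" "g \<in> borel_measurable borel"
    and p: "p > 1" and q: "q \<ge> p / (p - 1)"
    and If: "(\<integral>\<^sup>+z. ennreal (\<bar>f z\<bar> powr p) \<partial>lborel) < \<infinity>"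
    and Ig: "(\<integral>\<^sup>+z. ennreal (\<bar>g z\<bar> powr q) \<partial>lborel) < \<infinity>"
    and M: "bmax f g x \<noteq> 0"
  shows "\<exists>T. good_radii f g x \<subseteq> {..T}"
proof -
  have "0 < bmax f g x" using M by (simp add: zero_less_iff_neq_zero)
  from ennreal_rat_dense[OF this] obtain r :: rat where
    r: "0 < ennreal (real_of_rat r)" "ennreal (real_of_rat r) < bmax f g x" by blast
  define t where "t = real_of_rat r / 2"
  have t: "t > 0" using r(1) by (simp add: t_def)
  have t2: "ennreal (2 * t) < bmax f g x" using r(2) by (simp add: t_def)
  define K where "K = ennreal (1 + t) * (\<integral>\<^sup>+z. ennreal (\<bar>f z\<bar> powr p) \<partial>lborel)
     + ennreal (t powr (p / (p - 1) - q)) * (\<integral>\<^sup>+z. ennreal (\<bar>g z\<bar> powr q) \<partial>lborel)"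
  have "K < \<infinity>" using If Ig unfolding K_def by (simp add: ennreal_mult_less_top)
  then obtain Kr where Kr: "K = ennreal Kr" "Kr \<ge> 0" by (cases K) auto
  define u where "u = unit_ball_vol (real CARD('n))"
  have u: "u > 0" by (simp add: u_def)
  define R0 where "R0 = max 1 (Kr / (t * u))"
  have Abound: "bavg f g x \<rho> \<le> ennreal (2 * t)" if \<rho>: "\<rho> \<ge> R0" for \<rho>
  proof -
    have \<rho>1: "\<rho> \<ge> 1" using \<rho> by (simp add: R0_def)
    define V where "V = u * \<rho> ^ CARD('n)"
    have "\<rho> ^ 1 \<le> \<rho> ^ CARD('n)" using \<rho>1 by (intro power_increasing) auto
    then have "\<rho> \<le> \<rho> ^ CARD('n)" by simp
    then have "Kr / (t * u) \<le> \<rho> ^ CARD('n)" using \<rho> by (simp add: R0_def)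
    then have KV: "Kr \<le> t * V" using t u by (simp add: V_def divide_le_eq algebra_simps)
    have V: "V > 0" using u \<rho>1 by (simp add: V_def)
    have "bavg f g x \<rho> = phi f g x \<rho> / ennreal V" using \<rho>1 bavg_eq[of \<rho> f g x] by (simp add: V_def u_def)
    also have "\<dots> \<le> (ennreal (t * V) + K) / ennreal V"
      by (rule divide_right_mono_ennreal)
        (use phi_bound[OF fg p q t, of \<rho> x] \<rho>1 in \<open>simp add: K_def V_def u_def add.assoc\<close>)
    also have "\<dots> = ennreal ((t * V + Kr) / V)"
      using Kr t V by (simp add: divide_ennreal ennreal_plus[symmetric] del: ennreal_plus)
    also have "\<dots> \<le> ennreal (2 * t)"
      using KV V by (intro ennreal_leI) (simp add: divide_le_eq mult.commute)
    finally show ?thesis .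
  qed
  show ?thesis
  proof (intro exI[of _ R0] subsetI)
    fix \<rho> assume "\<rho> \<in> good_radii f g x"
    then obtain rk where rk: "\<forall>k. rk k > 0" "rk \<longlonglongrightarrow> \<rho>" "bmax f g x = limsup (\<lambda>k. bavg f g x (rk k))"
      unfolding good_radii_def by blast
    show "\<rho> \<in> {..R0}"
    proof (rule ccontr)
      assume "\<rho> \<notin> {..R0}"
      then have "R0 < \<rho>" by simp
      from order_tendstoD(1)[OF rk(2) this]
      have "eventually (\<lambda>k. bavg f g x (rk k) \<le> ennreal (2 * t)) sequentially"
        by eventually_elim (rule Abound, simp)
      then have "limsup (\<lambda>k. bavg f g x (rk k)) \<le> ennreal (2 * t)" by (rule Limsup_bounded)
      with t2 rk(3) show False by simp
    qed
  qed
qed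

lemma Lp_borel:
  fixes f :: "real^'n \<Rightarrow> real"
  assumes "in_Lp p f"
  obtains f' where "f' \<in> borel_measurable borel" "AE x in lborel. f x = f' x"
    "(\<integral>\<^sup>+z. ennreal (\<bar>f' z\<bar> powr p) \<partial>lborel) < \<infinity>"
proof -
  from assms have fm: "f \<in> borel_measurable lebesgue" and fi: "integrable lebesgue (\<lambda>x. \<bar>f x\<bar> powr p)"
    unfolding in_Lp_def by auto
  from completion_ex_borel_measurable_real[OF fm] obtain f' where
    f': "f' \<in> borel_measurable lborel" "AE x in lborel. f x = f' x" by blast
  have "(\<integral>\<^sup>+x. ennreal (norm (\<bar>f x\<bar> powr p)) \<partial>lebesgue) < \<infinity>"
    using fi by (simp add: integrable_iff_bounded)
  then have "(\<integral>\<^sup>+x. ennreal (\<bar>f x\<bar> powr p) \<partial>lborel) < \<infinity>"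
    by (simp add: nn_integral_completion)
  also have "(\<integral>\<^sup>+x. ennreal (\<bar>f x\<bar> powr p) \<partial>lborel) = (\<integral>\<^sup>+x. ennreal (\<bar>f' x\<bar> powr p) \<partial>lborel)"
    by (rule nn_integral_cong_AE) (use f'(2) in \<open>auto elim!: eventually_mono\<close>)
  finally show ?thesis using f' that by simp
qed

theorem lemma3:
  fixes f g :: "real^'n \<Rightarrow> real" and p q :: real
  assumes "1 < p" and "1 < q"
    and "in_Lp p f" and "in_Lp q g"
    and "1/p + 1/q < 1 \<or> (CARD('n) = 1 \<and> 1/p + 1/q \<le> 1)"
  shows "\<forall>i::'n. \<forall>R>0. \<forall>l>0.
     ((\<lambda>h::real. louter {x \<in> ball 0 R.
         hdist (good_radii f g x) (good_radii f g (x + h *\<^sub>R axis i 1)) > ereal l}) \<longlongrightarrow> 0) (at 0)"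
proof (intro allI impI)
  fix i :: 'n and R l :: real assume "R > 0" "l > 0"
  obtain f' where f': "f' \<in> borel_measurable borel" "AE x in lborel. f x = f' x"
    "(\<integral>\<^sup>+z. ennreal (\<bar>f' z\<bar> powr p) \<partial>lborel) < \<infinity>" using Lp_borel[OF assms(3)] by blast
  obtain g' where g': "g' \<in> borel_measurable borel" "AE x in lborel. g x = g' x"
    "(\<integral>\<^sup>+z. ennreal (\<bar>g' z\<bar> powr q) \<partial>lborel) < \<infinity>" using Lp_borel[OF assms(4)] by blast
  have bav: "bavg f g = bavg f' g'" by (rule bavg_cong[OF f'(2) g'(2)])
  have bm: "bmax f g = bmax f' g'" by (simp add: bmax_def[abs_def] bav)
  have gr: "good_radii f g = good_radii f' g'" by (simp add: good_radii_def[abs_def] bav bm)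
  have pq: "1/p + 1/q \<le> 1" using assms(5) by auto
  have "(1/p + 1/q) * (p*q) \<le> 1 * (p*q)" by (rule mult_right_mono[OF pq]) (use assms(1,2) in simp)
  moreover have "(1/p + 1/q) * (p*q) = q + p" using assms(1,2) by (simp add: field_simps)
  ultimately have "q + p \<le> p * q" by simp
  then have "p \<le> q * (p - 1)" by (simp add: algebra_simps)
  then have qp: "q \<ge> p / (p - 1)" using assms(1) by (simp add: pos_divide_le_eq)
  show "((\<lambda>h::real. louter {x \<in> ball 0 R.
         hdist (good_radii f g x) (good_radii f g (x + h *\<^sub>R axis i 1)) > ereal l}) \<longlongrightarrow> 0) (at 0)"
    unfolding gr
  proof (rule assemble[where Z="{x. bmax f' g' x = 0}"])
    show "\<And>x. good_radii f' g' x \<subseteq> {0..}" by (rule gr_pos)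
    show "\<And>a b. 0 \<le> a \<Longrightarrow> a \<le> b \<Longrightarrow> {x. good_radii f' g' x \<inter> {a..b} \<noteq> {}} \<in> sets lebesgue"
      by (rule hit_sets[OF f'(1) g'(1)])
    show "{x. bmax f' g' x = 0} \<in> sets lebesgue" by (rule zero_sets[OF f'(1) g'(1)])
    show "\<And>x. x \<in> {x. bmax f' g' x = 0} \<Longrightarrow> good_radii f' g' x = {0..}" by (rule gr_zero) simp
    show "\<And>x. x \<notin> {x. bmax f' g' x = 0} \<Longrightarrow> \<exists>T. good_radii f' g' x \<subseteq> {..T}"
      by (rule bdd_gr[OF f'(1) g'(1) assms(1) qp f'(3) g'(3)]) simp
    show "l > 0" by fact
  qed
qed


end
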